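(* Let $S(x)=\frac12\Big(1+\frac{\sinh(2x)}{2x}-2\Big(\frac{\sinh x}{x}\Big)^2-\frac{2x^4}{45}\Big)$. Then for all $0<x\le\frac32$, $$S(x)\le\frac{x^6}{270}.$$ *)

theory Defs
  imports Complex_Main
begin

definition S :: "real \<Rightarrow> real" where
  "S x = (1/2) * (1 + sinh (2*x) / (2*x) - 2 * (sinh x / x)^2 - 2 * x^4 / 45)"

end

theory Submission
  imports Defs
begin

lemma num_lemma: "(\<Sum>i<8. (if even i then (real i + 4) * 3^i / fact (i+8) else 0)) + (3^8 * 12 / fact 16) * 2 \<le> (1::real)/8640"
proof -
  define g where "g i = (if even i then (real i + 4) * 3^i / fact (i+8) else (0::real))" for i
  have "(\<Sum>i<8. g i) = g 0 + g 1 + g 2 + g 3 + g 4 + g 5 + g 6 + g 7"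
    by (simp add: eval_nat_numeral)
  also have "\<dots> + (3^8 * 12 / fact 16) * 2 \<le> 1/8640" by (simp add: g_def fact_numeral)
  finally show ?thesis unfolding g_def .
qed

lemma gen: "c \<noteq> 0 \<Longrightarrow> b \<noteq> 0 \<Longrightarrow> F \<noteq> 0 \<Longrightarrow>
   (3*A)*d/(c*F) = (A*b/F)*(3*d/(b*c::real))"
  by (simp add: field_simps)

lemma tail_bound:
  "(3::real)^(i+8) * (real i + 12) / fact (i+16) \<le> (3^8 * 12 / fact 16) * (1/2)^i"
proof (induction i)
  case 0
  then show ?case by simp
next
  case (Suc i)
  have r: "(3::real)^(Suc i+8) * (real (Suc i) + 12) / fact (Suc i+16)
     = ((3::real)^(i+8) * (real i + 12) / fact (i+16)) * (3 * (real i + 13) / ((real i + 12) * (real i + 17)))"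
  proof -
    have f0: "fact (Suc (i+16)) = real (Suc (i+16)) * (fact (i+16)::real)"
      by (rule fact_Suc)
    have f: "fact (Suc i + 16) = (real i + 17) * (fact (i+16)::real)"
      using f0 by simp
    have t: "(3::real)^(Suc i + 8) = 3 * 3^(i+8)" by (metis add_Suc power_Suc)
    have fp: "(0::real) < fact (i+16)" by simp
    have a1: "real i + 12 \<noteq> 0" "real i + 17 \<noteq> 0" "fact (i+16) \<noteq> (0::real)" by auto
    show ?thesis unfolding f t using a1 gen[of "real i + 17" "real i + 12" "fact (i+16)" "3^(i+8)" "real i + 13"]
      by (simp add: add.commute)
  qed
  have q: "3 * (real i + 13) / ((real i + 12) * (real i + 17)) \<le> 1/2"
  proof -
    have pos: "0 < (real i + 12) * (real i + 17)" by simp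
    have ex: "(real i + 12) * (real i + 17) = real i * real i + 29 * real i + 204"
      by (simp add: algebra_simps)
    have h: "0 \<le> real i * real i / 2" "0 \<le> real i * 29 / 2" by auto
    have g: "real i * 3 \<le> 63 + (real i * real i / 2 + real i * 29 / 2)" using h by linarith
    have "3 * (real i + 13) \<le> 1/2 * ((real i + 12) * (real i + 17))"
      using g by (simp add: algebra_simps)
    then show ?thesis using pos by (simp add: pos_divide_le_eq)
  qed
  have nn: "0 \<le> (3::real)^(i+8) * (real i + 12) / fact (i+16)" by simp
  have "(3::real)^(Suc i+8) * (real (Suc i) + 12) / fact (Suc i+16)
     \<le> ((3^8 * 12 / fact 16) * (1/2)^i) * (1/2)"
    unfolding r
    by (rule mult_mono[OF Suc.IH q]) simp_all
  then show ?case by simp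
qed

lemma main_ineq:
  fixes y :: real
  assumes y0: "0 < y" and y3: "y \<le> 3"
  shows "y * sinh y - 4 * cosh y + 4 + y^2 - y^6/360 \<le> y^8 / 8640"
proof -
  define e where "e n = (if even n then (real n - 4) * y^n / fact n else 0)" for n
  define p where "p n = (if even n then real n * y^n / fact n else 0)" for n
  have s1: "(\<lambda>n. y * (if even n then 0 else y ^ n /\<^sub>R fact n)) sums (y * sinh y)"
    by (rule sums_mult[OF sinh_converges])
  have "(\<lambda>n. p (Suc n)) = (\<lambda>n. y * (if even n then 0 else y ^ n /\<^sub>R fact n))"
  proof
    fix n
    show "p (Suc n) = y * (if even n then 0 else y ^ n /\<^sub>R fact n)"
    proof (cases "even n")
      case False
      have f: "fact (Suc n) = (1 + real n) * (fact n::real)" by simp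
      have fp: "(0::real) < fact n" by simp
      have "p (Suc n) = (1 + real n) * (y * y^n) / ((1 + real n) * fact n)"
        using False unfolding p_def f by simp
      also have "\<dots> = y * y^n / fact n"
        by (rule mult_divide_mult_cancel_left) simp
      finally show ?thesis using False by (simp add: scaleR_conv_of_real field_simps)
    qed (simp add: p_def)
  qed
  with s1 have "(\<lambda>n. p (Suc n)) sums (y * sinh y)" by simp
  then have sp: "p sums (y * sinh y)" using sums_Suc_iff[of p] by (simp add: p_def)
  have sc: "(\<lambda>n. 4 * (if even n then y ^ n /\<^sub>R fact n else 0)) sums (4 * cosh y)"
    by (rule sums_mult[OF cosh_converges])
  have "(\<lambda>n. p n - 4 * (if even n then y ^ n /\<^sub>R fact n else 0)) = e"
    by (auto simp: p_def e_def fun_eq_iff field_simps)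
  with sums_diff[OF sp sc] have se: "e sums (y * sinh y - 4 * cosh y)" by simp
  have sume: "summable e" using se by (rule sums_summable)
  have init: "(\<Sum>i<8. e i) = -4 - y^2 + y^6/360"
  proof -
    have "(\<Sum>i<8. e i) = e 0 + e 1 + e 2 + e 3 + e 4 + e 5 + e 6 + e 7"
      by (simp add: eval_nat_numeral)
    also have "\<dots> = -4 - y^2 + y^6/360"
      by (simp add: e_def fact_numeral)
    finally show ?thesis .
  qed
  have f_eq: "y * sinh y - 4 * cosh y + 4 + y^2 - y^6/360 = (\<Sum>n. e (n+8))"
    using suminf_split_initial_segment[OF sume, of 8] init sums_unique[OF se] by simp
  have sum8: "summable (\<lambda>n. e (n+8))" using sume by simp
  have split2: "(\<Sum>n. e (n+8)) = (\<Sum>n. e (n+16)) + (\<Sum>i<8. e (i+8))"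
    using suminf_split_initial_segment[OF sum8, of 8] by (simp add: add.assoc)
  define B :: real where "B = 3^8 * 12 / fact 16"
  have y8: "0 < y^8" using y0 by simp
  have tb: "e (i+16) \<le> y^8 * (B * (1/2)^i)" for i
  proof -
    have "e (i+16) \<le> (real i + 12) * y^(i+16) / fact (i+16)"
      using y0 by (simp add: e_def algebra_simps)
    also have "\<dots> = y^8 * (y^(i+8) * (real i + 12) / fact (i+16))"
      by (simp add: power_add field_simps)
    also have "\<dots> \<le> y^8 * (3^(i+8) * (real i + 12) / fact (i+16))"
      using y0 y3 y8 by (intro mult_left_mono divide_right_mono mult_right_mono power_mono) auto
    also have "\<dots> \<le> y^8 * (B * (1/2)^i)"
      using tail_bound[of i] y8 unfolding B_def by (intro mult_left_mono) auto
    finally show ?thesis .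
  qed
  have geo: "(\<lambda>i. y^8 * (B * (1/2::real)^i)) sums (y^8 * (B * 2))"
    using sums_mult[OF geometric_sums[of "1/2::real"], of "y^8*B"] by (simp add: mult.assoc)
  have tail: "(\<Sum>n. e (n+16)) \<le> y^8 * (B * 2)"
  proof -
    have st: "summable (\<lambda>n. e (n+16))" using sume by simp
    have "(\<Sum>n. e (n+16)) \<le> (\<Sum>i. y^8 * (B * (1/2)^i))"
      by (rule suminf_le[OF tb st sums_summable[OF geo]])
    then show ?thesis using sums_unique[OF geo] by simp
  qed
  have hb: "e (i+8) \<le> y^8 * (if even i then (real i + 4) * 3^i / fact (i+8) else 0)" for i
  proof (cases "even i")
    case True
    have "e (i+8) = y^8 * ((real i + 4) * y^i / fact (i+8))"
      using True by (simp add: e_def power_add field_simps)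
    also have "\<dots> \<le> y^8 * ((real i + 4) * 3^i / fact (i+8))"
      using y0 y3 y8 by (intro mult_left_mono divide_right_mono mult_left_mono power_mono) auto
    finally show ?thesis using True by simp
  next
    case False
    then show ?thesis by (simp add: e_def)
  qed
  have head: "(\<Sum>i<8. e (i+8)) \<le> y^8 * (\<Sum>i<8. (if even i then (real i + 4) * 3^i / fact (i+8) else 0))"
    unfolding sum_distrib_left by (rule sum_mono) (rule hb)
  have num: "(\<Sum>i<8. (if even i then (real i + 4) * 3^i / fact (i+8) else 0)) + B * 2 \<le> 1/8640"
    unfolding B_def by (rule num_lemma)
  have "(\<Sum>n. e (n+8)) \<le> y^8 * ((\<Sum>i<8. (if even i then (real i + 4) * 3^i / fact (i+8) else 0)) + B * 2)"
    using split2 tail head by (simp add: algebra_simps)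
  also have "\<dots> \<le> y^8 * (1/8640)"
    using num y8 by (intro mult_left_mono) auto
  finally show ?thesis using f_eq by simp
qed

theorem lemma2:
  fixes x :: real
  assumes "0 < x" and "x \<le> 3/2"
  shows "S x \<le> x^6 / 270"
proof -
  have m: "2*x*sinh (2*x) - 4 * cosh (2*x) + 4 + (2*x)^2 - (2*x)^6/360 \<le> (2*x)^8 / 8640"
    using main_ineq[of "2*x"] assms by simp
  have sh: "sinh (2*x) = 2 * sinh x * cosh x" by (rule sinh_double)
  have ch: "cosh (2*x) = 1 + 2 * sinh x ^ 2"
    using cosh_double[of x] cosh_square_eq[of x] by simp
  have "S x = (8*x^2 + 4*x*sinh (2*x) - 16 * sinh x ^ 2 - 16*x^6/45) / (16*x^2)"
    using assms by (simp add: S_def field_simps power2_eq_square eval_nat_numeral)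
  also have "\<dots> = (2*x*sinh (2*x) - 4 * cosh (2*x) + 4 + (2*x)^2 - (2*x)^6/360) / (8*x^2)"
    using assms unfolding ch by (simp add: field_simps power2_eq_square)
  also have "\<dots> \<le> ((2*x)^8 / 8640) / (8*x^2)"
    using m assms by (intro divide_right_mono) auto
  also have "\<dots> = x^6/270"
    using assms by (simp add: field_simps eval_nat_numeral)
  finally show ?thesis .
qed

end
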